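(* Let $G$ be a finite graph having at least one sink-free orientation. Consider the algorithm: orient each edge of $G$ independently and uniformly at random; while there is at least one sink, re-orient independently and uniformly at random all edges incident to some sink (all sinks present at that moment simultaneously); output the current orientation. Let $Z_{\mathrm{sink},0}$ be the number of sink-free orientations of $G$ and $Z_{\mathrm{sink},1}$ the number of orientations of $G$ with exactly one sink. Then the expected total number of resampled sinks (summed over all rounds) is $\frac{Z_{\mathrm{sink},1}}{Z_{\mathrm{sink},0}}$.
   Context: An orientation assigns to each edge $\{u,v\}$ one of the directions $(u,v)$ or $(v,u)$. A sink is a vertex $v$ such that every edge incident to $v$ is directed towards $v$. A sink-free orientation is one with no sink. *)

theory Defs
  imports "HOL-Probability.Probability"
begin

definition finite_graph :: "'a set \<Rightarrow> 'a set set \<Rightarrow> bool" where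
  "finite_graph V E \<longleftrightarrow> finite V \<and> (\<forall>e\<in>E. e \<subseteq> V \<and> card e = 2)"

text \<open>An orientation assigns to each edge its head (the vertex it points to);
  outside E the value is fixed to undefined so that the set of orientations is finite.\<close>
definition orientations :: "'a set set \<Rightarrow> ('a set \<Rightarrow> 'a) set" where
  "orientations E = {\<sigma>. (\<forall>e\<in>E. \<sigma> e \<in> e) \<and> (\<forall>e. e \<notin> E \<longrightarrow> \<sigma> e = undefined)}"

definition sinks :: "'a set \<Rightarrow> 'a set set \<Rightarrow> ('a set \<Rightarrow> 'a) \<Rightarrow> 'a set" where
  "sinks V E \<sigma> = {v\<in>V. \<forall>e\<in>E. v \<in> e \<longrightarrow> \<sigma> e = v}"

definition Z_sink :: "nat \<Rightarrow> 'a set \<Rightarrow> 'a set set \<Rightarrow> nat" where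
  "Z_sink k V E = card {\<sigma>\<in>orientations E. card (sinks V E \<sigma>) = k}"

definition resample :: "'a set set \<Rightarrow> 'a set \<Rightarrow> ('a set \<Rightarrow> 'a) \<Rightarrow> ('a set \<Rightarrow> 'a) pmf" where
  "resample E S \<sigma> = map_pmf (\<lambda>t e. if e \<in> E \<and> e \<inter> S \<noteq> {} then t e else \<sigma> e)
                              (pmf_of_set (orientations E))"

text \<open>One round of the algorithm; once sink-free the state stays fixed (output).\<close>
definition prs_step :: "'a set \<Rightarrow> 'a set set \<Rightarrow> ('a set \<Rightarrow> 'a) \<Rightarrow> ('a set \<Rightarrow> 'a) pmf" where
  "prs_step V E \<sigma> = (if sinks V E \<sigma> = {} then return_pmf \<sigma> else resample E (sinks V E \<sigma>) \<sigma>)"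

definition prs_dist :: "'a set \<Rightarrow> 'a set set \<Rightarrow> nat \<Rightarrow> ('a set \<Rightarrow> 'a) pmf" where
  "prs_dist V E t = ((\<lambda>p. bind_pmf p (prs_step V E)) ^^ t) (pmf_of_set (orientations E))"

end

theory Submission imports Defs begin

locale sfo =
  fixes V :: "'a set" and E :: "'a set set"
  assumes fg: "finite_graph V E" and Zpos: "Z_sink 0 V E > 0"
begin

abbreviation "Om \<equiv> orientations E"
abbreviation "Sk \<equiv> sinks V E"
definition "Et T = {e\<in>E. e \<inter> T \<noteq> {}}"
definition "Gp T = T \<union> \<Union>(Et T)"
definition "mrg \<rho> T s = (\<lambda>e. if e \<in> Et T then \<rho> e else s e)"

lemma finV: "finite V" using fg by (simp add: finite_graph_def)
lemma EsubV: "e \<in> E \<Longrightarrow> e \<subseteq> V" using fg by (simp add: finite_graph_def)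
lemma card2: "e \<in> E \<Longrightarrow> card e = 2" using fg by (simp add: finite_graph_def)
lemma finE: "finite E"
  by (rule finite_subset[of E "Pow V"]) (use EsubV finV in auto)
lemma fine: "e \<in> E \<Longrightarrow> finite e" using card2 by (metis card.infinite zero_neq_numeral)

lemma O_PiE: "Om = Pi\<^sub>E E (\<lambda>e. e)"
  unfolding orientations_def PiE_def Pi_def extensional_def by auto

lemma finO: "finite Om" unfolding O_PiE using finE fine by (intro finite_PiE) auto

lemma cnt: assumes "s \<in> Om" "F \<subseteq> E"
  shows "card {s'\<in>Om. \<forall>e\<in>E-F. s' e = s e} = 2 ^ card F"
proof -
  have "{s'\<in>Om. \<forall>e\<in>E-F. s' e = s e} = Pi\<^sub>E E (\<lambda>e. if e \<in> F then e else {s e})"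
    using assms(1) unfolding O_PiE PiE_def Pi_def extensional_def by auto
  hence "card {s'\<in>Om. \<forall>e\<in>E-F. s' e = s e} = (\<Prod>e\<in>E. card (if e \<in> F then e else {s e}))"
    using finE by (simp add: card_PiE)
  also have "\<dots> = (\<Prod>e\<in>E. if e \<in> F then 2 else 1)"
    by (rule prod.cong) (auto simp: card2)
  also have "\<dots> = 2 ^ card F"
    using assms(2) finE by (simp add: prod.If_cases Int_absorb1 Int_absorb2)
  finally show ?thesis .
qed

lemma cardO: "card Om = 2 ^ card E"
proof -
  have "Om = {s'\<in>Om. \<forall>e\<in>E-E. s' e = s' e}" by auto
  have "card Om = (\<Prod>e\<in>E. card e)" unfolding O_PiE using finE by (simp add: card_PiE)
  also have "\<dots> = (\<Prod>e\<in>E. 2)" by (rule prod.cong) (auto simp: card2)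
  finally show ?thesis by simp
qed

lemma SkV: "Sk s \<subseteq> V" unfolding sinks_def by auto
lemma finSk: "finite (Sk s)" using SkV finV finite_subset by blast

lemma sink_val: "s \<in> Om \<Longrightarrow> t \<in> Sk s \<Longrightarrow> e \<in> E \<Longrightarrow> t \<in> e \<Longrightarrow> s e = t"
  unfolding sinks_def by auto

lemma O_undef: "s \<in> Om \<Longrightarrow> e \<notin> E \<Longrightarrow> s e = undefined"
  unfolding orientations_def by auto
lemma O_in: "s \<in> Om \<Longrightarrow> e \<in> E \<Longrightarrow> s e \<in> e"
  unfolding orientations_def by auto

lemma Et_sub: "Et T \<subseteq> E" unfolding Et_def by auto
lemma T_Gp: "T \<subseteq> Gp T" unfolding Gp_def by auto

lemma mrg_O: assumes "\<rho> \<in> Om" "s \<in> Om" shows "mrg \<rho> T s \<in> Om"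
  using assms Et_sub unfolding mrg_def orientations_def by auto

lemma mrg_Sk: assumes "\<rho> \<in> Om" "T \<subseteq> Sk \<rho>" "s \<in> Om"
  shows "Sk (mrg \<rho> T s) = T \<union> (Sk s - Gp T)"
proof (rule set_eqI)
  fix v
  have TV: "T \<subseteq> V" using assms(2) SkV by blast
  show "v \<in> Sk (mrg \<rho> T s) \<longleftrightarrow> v \<in> T \<union> (Sk s - Gp T)"
  proof (cases "v \<in> T")
    case True
    have "e \<in> E \<Longrightarrow> v \<in> e \<Longrightarrow> mrg \<rho> T s e = v" for e
      using True assms sink_val[of \<rho> v e] unfolding mrg_def Et_def by auto
    then show ?thesis using True TV unfolding sinks_def by auto
  next
    case nT: False
    show ?thesis
    proof (cases "v \<in> Gp T")
      case True
      then obtain e where e: "e \<in> Et T" "v \<in> e" using nT unfolding Gp_def by auto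
      then obtain t where t: "t \<in> e" "t \<in> T" unfolding Et_def by auto
      have "mrg \<rho> T s e = t" using e t assms sink_val[of \<rho> t e] unfolding mrg_def Et_def by auto
      then have "v \<notin> Sk (mrg \<rho> T s)" using e t nT unfolding sinks_def Et_def by auto
      then show ?thesis using True nT by auto
    next
      case False
      have "e \<in> E \<Longrightarrow> v \<in> e \<Longrightarrow> mrg \<rho> T s e = s e" for e
        using False unfolding mrg_def Gp_def by auto
      then show ?thesis using False nT unfolding sinks_def by auto
    qed
  qed
qed

lemma mrg_char: assumes "\<rho> \<in> Om" "T \<subseteq> Sk \<rho>" "s' \<in> Om" "s \<in> Om"
  shows "(T \<subseteq> Sk s \<and> (\<forall>e\<in>E - Et T. s e = s' e)) \<longleftrightarrow> s = mrg \<rho> T s'"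
proof
  assume a: "T \<subseteq> Sk s \<and> (\<forall>e\<in>E - Et T. s e = s' e)"
  show "s = mrg \<rho> T s'"
  proof
    fix e
    show "s e = mrg \<rho> T s' e"
    proof (cases "e \<in> Et T")
      case True
      then obtain t where t: "t \<in> e" "t \<in> T" "e \<in> E" unfolding Et_def by auto
      then show ?thesis using a assms sink_val[of \<rho> t e] sink_val[of s t e] True
        unfolding mrg_def by auto
    next
      case False
      then show ?thesis using a assms O_undef[of s e] O_undef[of s' e] unfolding mrg_def
        by (cases "e \<in> E") auto
    qed
  qed
next
  assume "s = mrg \<rho> T s'"
  then show "T \<subseteq> Sk s \<and> (\<forall>e\<in>E - Et T. s e = s' e)"
    using mrg_Sk[OF assms(1-3)] unfolding mrg_def by auto
qed

definition "W U = card {s\<in>Om. Sk s \<subseteq> U}"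
definition "Zs T = card {s\<in>Om. Sk s = T}"
definition "K1 U = card {s\<in>Om. card (Sk s - U) = 1}"
abbreviation "Z0 \<equiv> Z_sink 0 V E"
abbreviation "Z1 \<equiv> Z_sink 1 V E"
definition "D U = real (K1 U) / real (W U)"
definition "g T = real (card T) + real Z1 / real Z0 - D (Gp T)"

lemma Z0_eq: "Z0 = Zs {}" "W {} = Zs {}" "K1 {} = Z1"
  unfolding Z_sink_def Zs_def W_def K1_def using finSk by auto

lemma sinkfree_ex: "\<exists>\<tau>\<in>Om. Sk \<tau> = {}"
proof -
  have "{s\<in>Om. Sk s = {}} \<noteq> {}" using Zpos Z0_eq unfolding Zs_def by (metis card.empty less_irrefl)
  then show ?thesis by auto
qed

lemma Om_ne: "Om \<noteq> {}" using sinkfree_ex by auto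

lemma Gp_empty: "Gp {} = {}" "Et {} = {}" unfolding Gp_def Et_def by auto

lemma g_empty: "g {} = 0"
  unfolding g_def D_def Gp_empty using Z0_eq by simp

lemma union_diff_eq: "T \<subseteq> G \<Longrightarrow> (T \<union> (X - G) = T) \<longleftrightarrow> X \<subseteq> G" by auto

lemma Kn: assumes "s \<in> Om"
  shows "pmf (prs_step V E s) s' =
    (if s' \<in> Om \<and> (\<forall>e\<in>E - Et (Sk s). s' e = s e) then 1 / 2 ^ card (Et (Sk s)) else 0)"
proof (cases "Sk s = {}")
  case True
  have eq: "(s' \<in> Om \<and> (\<forall>e\<in>E - Et (Sk s). s' e = s e)) \<longleftrightarrow> s' = s"
  proof
    assume a: "s' \<in> Om \<and> (\<forall>e\<in>E - Et (Sk s). s' e = s e)"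
    show "s' = s"
    proof
      fix e show "s' e = s e" using a assms O_undef[of s e] O_undef[of s' e] True Gp_empty
        by (cases "e \<in> E") auto
    qed
  qed (use assms in auto)
  have st: "prs_step V E s = return_pmf s" using True by (simp add: prs_step_def)
  show ?thesis unfolding st pmf_return eq using True by (simp add: Gp_empty)
next
  case False
  let ?S = "Sk s"
  let ?f = "\<lambda>t e. if e \<in> Et ?S then t e else s e"
  have fEt: "(\<lambda>t e. if e \<in> E \<and> e \<inter> ?S \<noteq> {} then t e else s e) = ?f" unfolding Et_def by simp
  have step: "prs_step V E s = map_pmf ?f (pmf_of_set Om)"
    using False unfolding prs_step_def resample_def fEt by simp
  have pm: "pmf (prs_step V E s) s' = card (Om \<inter> ?f -` {s'}) / card Om"
    unfolding step pmf_map using finO Om_ne by (simp add: measure_pmf_of_set)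
  show ?thesis
  proof (cases "s' \<in> Om \<and> (\<forall>e\<in>E - Et ?S. s' e = s e)")
    case True
    have "Om \<inter> ?f -` {s'} = {t\<in>Om. \<forall>e\<in>E - (E - Et ?S). t e = s' e}"
    proof (rule set_eqI, rule iffI)
      fix t assume t: "t \<in> Om \<inter> ?f -` {s'}"
      have "\<forall>e\<in>E - (E - Et ?S). t e = s' e"
      proof
        fix e assume "e \<in> E - (E - Et ?S)"
        then have "e \<in> Et ?S" by blast
        moreover have "?f t = s'" using t by blast
        ultimately show "t e = s' e" using arg_cong[of "?f t" s' "\<lambda>F. F e"] by simp
      qed
      then show "t \<in> {t\<in>Om. \<forall>e\<in>E - (E - Et ?S). t e = s' e}" using t by blast
    next
      fix t assume t: "t \<in> {t\<in>Om. \<forall>e\<in>E - (E - Et ?S). t e = s' e}"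
      have "?f t = s'"
      proof
        fix e show "?f t e = s' e"
        proof (cases "e \<in> E")
          case True then show ?thesis using t \<open>s' \<in> Om \<and> _\<close> by auto
        next
          case False then have "e \<notin> Et ?S" using Et_sub by blast
          then show ?thesis using False assms True O_undef[of s e] O_undef[of s' e] by simp
        qed
      qed
      then show "t \<in> Om \<inter> ?f -` {s'}" using t by simp
    qed
    then have c1: "card (Om \<inter> ?f -` {s'}) = 2 ^ card (E - Et ?S)"
      using cnt[of s' "E - Et ?S"] True by simp
    have "card (E - Et ?S) + card (Et ?S) = card E"
      using card_Diff_subset[OF finite_subset[OF Et_sub finE] Et_sub] card_mono[OF finE Et_sub] by simp
    then have c: "card (Om \<inter> ?f -` {s'}) * 2 ^ card (Et ?S) = 2 ^ card E"
      unfolding c1 by (metis power_add)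
    then have "real (card (Om \<inter> ?f -` {s'}) * 2 ^ card (Et ?S)) = real (2 ^ card E)"
      by (simp only:)
    then have "real (card (Om \<inter> ?f -` {s'})) * 2 ^ card (Et ?S) = 2 ^ card E"
      by simp
    then have "real (card (Om \<inter> ?f -` {s'})) = 2 ^ card E / 2 ^ card (Et ?S)"
      by (simp add: field_simps)
    then show ?thesis using True pm cardO by simp
  next
    case nc: False
    have "Om \<inter> ?f -` {s'} = {}"
    proof (rule ccontr)
      assume "Om \<inter> ?f -` {s'} \<noteq> {}"
      then obtain t where t: "t \<in> Om" "?f t = s'" by auto
      have "?f t \<in> Om" using t(1) assms Et_sub unfolding orientations_def by auto
      moreover have "\<forall>e\<in>E - Et ?S. ?f t e = s e" by simp
      ultimately show False using nc t by auto
    qed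
    then show ?thesis using pm nc by simp
  qed
qed

lemma KL: assumes "\<rho> \<in> Om" "s' \<in> Om"
  shows "(\<Sum>s\<in>{s\<in>Om. Sk s = Sk \<rho>}. pmf (prs_step V E s) s') =
     (if Sk s' \<subseteq> Gp (Sk \<rho>) then 1 / 2 ^ card (Et (Sk \<rho>)) else 0)"
proof -
  let ?T = "Sk \<rho>"
  let ?c = "1 / 2 ^ card (Et ?T) :: real"
  have "(\<Sum>s\<in>{s\<in>Om. Sk s = ?T}. pmf (prs_step V E s) s') =
        (\<Sum>s\<in>{s\<in>Om. Sk s = ?T}. if (\<forall>e\<in>E - Et ?T. s' e = s e) then ?c else 0)"
    by (rule sum.cong) (use assms in \<open>auto simp: Kn\<close>)
  also have "\<dots> = (\<Sum>s\<in>{s\<in>{s\<in>Om. Sk s = ?T}. \<forall>e\<in>E - Et ?T. s' e = s e}. ?c)"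
    using finO by (subst sum.inter_filter) auto
  also have "{s\<in>{s\<in>Om. Sk s = ?T}. \<forall>e\<in>E - Et ?T. s' e = s e} =
       (if Sk s' \<subseteq> Gp ?T then {mrg \<rho> ?T s'} else {})"
  proof -
    have "s \<in> {s\<in>{s\<in>Om. Sk s = ?T}. \<forall>e\<in>E - Et ?T. s' e = s e} \<longleftrightarrow>
          s = mrg \<rho> ?T s' \<and> Sk s' \<subseteq> Gp ?T" for s
    proof
      assume a: "s \<in> {s\<in>{s\<in>Om. Sk s = ?T}. \<forall>e\<in>E - Et ?T. s' e = s e}"
      then have "?T \<subseteq> Sk s \<and> (\<forall>e\<in>E - Et ?T. s e = s' e)" "s \<in> Om" by auto
      then have "s = mrg \<rho> ?T s'" using mrg_char[OF assms(1) order_refl assms(2), where s=s] by blast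
      moreover have "Sk (mrg \<rho> ?T s') = ?T" using a calculation by auto
      ultimately show "s = mrg \<rho> ?T s' \<and> Sk s' \<subseteq> Gp ?T"
        using mrg_Sk[OF assms(1) _ assms(2)] union_diff_eq[OF T_Gp] by auto
    next
      assume a: "s = mrg \<rho> ?T s' \<and> Sk s' \<subseteq> Gp ?T"
      then have "Sk s = ?T" using mrg_Sk[OF assms(1) _ assms(2)] union_diff_eq[OF T_Gp] by auto
      moreover have "s \<in> Om" using a mrg_O assms by auto
      moreover have "\<forall>e\<in>E - Et ?T. s' e = s e" using a unfolding mrg_def by auto
      ultimately show "s \<in> {s\<in>{s\<in>Om. Sk s = ?T}. \<forall>e\<in>E - Et ?T. s' e = s e}" by auto
    qed
    then show ?thesis by auto
  qed
  finally show ?thesis by simp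
qed

lemma DC: assumes "\<rho> \<in> Om" "T \<subseteq> Sk \<rho>"
  shows "(\<Sum>s'\<in>Om. (\<phi> (T \<union> (Sk s' - Gp T)) :: real)) =
         2 ^ card (Et T) * (\<Sum>s\<in>{s\<in>Om. T \<subseteq> Sk s}. \<phi> (Sk s))"
proof -
  let ?A = "{s\<in>Om. T \<subseteq> Sk s}"
  let ?P = "\<lambda>s' s. \<forall>e\<in>E - Et T. s' e = s e"
  have "2 ^ card (Et T) * (\<Sum>s\<in>?A. \<phi> (Sk s)) = (\<Sum>s\<in>?A. \<phi> (Sk s) * card {s'\<in>Om. ?P s' s})"
    using cnt[OF _ Et_sub] by (simp add: sum_distrib_left mult.commute)
  also have "\<dots> = (\<Sum>s\<in>?A. \<Sum>s'\<in>Om. if ?P s' s then \<phi> (Sk s) else 0)"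
  proof (rule sum.cong[OF refl])
    fix s assume "s \<in> ?A"
    have "(\<Sum>s'\<in>Om. if ?P s' s then \<phi> (Sk s) else 0) = (\<Sum>s'\<in>{s'\<in>Om. ?P s' s}. \<phi> (Sk s))"
      using finO by (subst sum.inter_filter) auto
    then show "\<phi> (Sk s) * card {s'\<in>Om. ?P s' s} = (\<Sum>s'\<in>Om. if ?P s' s then \<phi> (Sk s) else 0)"
      by simp
  qed
  also have "\<dots> = (\<Sum>s'\<in>Om. \<Sum>s\<in>?A. if ?P s' s then \<phi> (Sk s) else 0)" by (rule sum.swap)
  also have "\<dots> = (\<Sum>s'\<in>Om. \<phi> (T \<union> (Sk s' - Gp T)))"
  proof (rule sum.cong[OF refl])
    fix s' assume s': "s' \<in> Om"
    have "s \<in> {s\<in>?A. ?P s' s} \<longleftrightarrow> s = mrg \<rho> T s'" for s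
      using mrg_char[OF assms s', where s=s] mrg_O[OF assms(1) s'] by (auto simp: eq_commute)
    then have "{s\<in>?A. ?P s' s} = {mrg \<rho> T s'}" by blast
    then have "(\<Sum>s\<in>?A. if ?P s' s then \<phi> (Sk s) else 0) = \<phi> (Sk (mrg \<rho> T s'))"
      using finO by (subst sum.inter_filter[symmetric]) auto
    then show "(\<Sum>s\<in>?A. if ?P s' s then \<phi> (Sk s) else 0) = \<phi> (T \<union> (Sk s' - Gp T))"
      using mrg_Sk[OF assms s'] by simp
  qed
  finally show ?thesis by simp
qed

lemma sum_ind: "finite A \<Longrightarrow> (\<Sum>x\<in>A. if P x then (1::real) else 0) = real (card {x\<in>A. P x})"
  by (simp add: sum.inter_filter[symmetric])

definition "N1 T = card {s\<in>Om. T \<subseteq> Sk s \<and> card (Sk s - T) = 1}"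

lemma W_Zs: assumes "\<rho> \<in> Om"
  shows "real (W (Gp (Sk \<rho>))) = 2 ^ card (Et (Sk \<rho>)) * real (Zs (Sk \<rho>))"
proof -
  let ?T = "Sk \<rho>"
  have "(\<Sum>s'\<in>Om. (if ?T \<union> (Sk s' - Gp ?T) = ?T then 1 else 0 :: real)) =
      2 ^ card (Et ?T) * (\<Sum>s\<in>{s\<in>Om. ?T \<subseteq> Sk s}. if Sk s = ?T then 1 else 0)"
    by (rule DC[OF assms order_refl])
  moreover have "(\<Sum>s'\<in>Om. (if ?T \<union> (Sk s' - Gp ?T) = ?T then 1 else 0 :: real)) = real (W (Gp ?T))"
    unfolding W_def union_diff_eq[OF T_Gp] using finO by (rule sum_ind)
  moreover have "(\<Sum>s\<in>{s\<in>Om. ?T \<subseteq> Sk s}. if Sk s = ?T then 1 else 0 :: real) = real (Zs ?T)"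
  proof -
    have "{s\<in>{s\<in>Om. ?T \<subseteq> Sk s}. Sk s = ?T} = {s\<in>Om. Sk s = ?T}" by auto
    then show ?thesis unfolding Zs_def using finO by (subst sum_ind) auto
  qed
  ultimately show ?thesis by simp
qed

lemma K1_N1: assumes "\<rho> \<in> Om" "T \<subseteq> Sk \<rho>"
  shows "real (K1 (Gp T)) = 2 ^ card (Et T) * real (N1 T)"
proof -
  have "(\<Sum>s'\<in>Om. (if card ((T \<union> (Sk s' - Gp T)) - T) = 1 then 1 else 0 :: real)) =
      2 ^ card (Et T) * (\<Sum>s\<in>{s\<in>Om. T \<subseteq> Sk s}. if card (Sk s - T) = 1 then 1 else 0)"
    by (rule DC[OF assms])
  moreover have "(T \<union> (X - Gp T)) - T = X - Gp T" for X using T_Gp[of T] by auto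
  moreover have "(\<Sum>s'\<in>Om. (if card (Sk s' - Gp T) = 1 then 1 else 0 :: real)) = real (K1 (Gp T))"
    unfolding K1_def using finO by (rule sum_ind)
  moreover have "(\<Sum>s\<in>{s\<in>Om. T \<subseteq> Sk s}. if card (Sk s - T) = 1 then 1 else 0 :: real) = real (N1 T)"
  proof -
    have "{s\<in>{s\<in>Om. T \<subseteq> Sk s}. card (Sk s - T) = 1} = {s\<in>Om. T \<subseteq> Sk s \<and> card (Sk s - T) = 1}" by auto
    then show ?thesis unfolding N1_def using finO by (subst sum_ind) auto
  qed
  ultimately show ?thesis by simp
qed

lemma Zs_pos: "s \<in> Om \<Longrightarrow> Zs (Sk s) > 0"
  unfolding Zs_def using finO by (subst card_gt_0_iff) auto

lemma D_eq: assumes "\<rho> \<in> Om"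
  shows "D (Gp (Sk \<rho>)) = real (N1 (Sk \<rho>)) / real (Zs (Sk \<rho>))"
  unfolding D_def using W_Zs[OF assms] K1_N1[OF assms order_refl] by simp

lemma realiz: assumes "\<rho> \<in> Om" "T \<subseteq> Sk \<rho>" shows "T \<in> Sk ` Om"
proof -
  obtain \<tau> where t: "\<tau> \<in> Om" "Sk \<tau> = {}" using sinkfree_ex by auto
  have "Sk (mrg \<rho> T \<tau>) = T" using mrg_Sk[OF assms t(1)] t(2) by simp
  then show ?thesis using mrg_O[OF assms(1) t(1)] by force
qed

lemma CC: "(\<Sum>s\<in>{s\<in>Om. P (Sk s)}. 1 / real (Zs (Sk s))) = real (card {T\<in>Sk ` Om. P T})"
proof -
  have "(\<Sum>s\<in>{s\<in>Om. P (Sk s)}. 1 / real (Zs (Sk s))) =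
        (\<Sum>T\<in>{T\<in>Sk ` Om. P T}. \<Sum>s\<in>{s\<in>{s\<in>Om. P (Sk s)}. Sk s = T}. 1 / real (Zs (Sk s)))"
    by (rule sum.group[symmetric]) (use finO in auto)
  also have "\<dots> = (\<Sum>T\<in>{T\<in>Sk ` Om. P T}. 1)"
  proof (rule sum.cong[OF refl])
    fix T assume T: "T \<in> {T\<in>Sk ` Om. P T}"
    have e: "{s\<in>{s\<in>Om. P (Sk s)}. Sk s = T} = {s\<in>Om. Sk s = T}" using T by auto
    have "Zs T > 0" using T Zs_pos by auto
    have "(\<Sum>s\<in>{s\<in>{s\<in>Om. P (Sk s)}. Sk s = T}. 1 / real (Zs (Sk s))) =
          (\<Sum>s\<in>{s\<in>Om. Sk s = T}. 1 / real (Zs T))" unfolding e by (rule sum.cong) auto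
    also have "\<dots> = 1" using \<open>Zs T > 0\<close> unfolding Zs_def by simp
    finally show "(\<Sum>s\<in>{s\<in>{s\<in>Om. P (Sk s)}. Sk s = T}. 1 / real (Zs (Sk s))) = 1" .
  qed
  finally show ?thesis by simp
qed

lemma cnt_v: assumes "finite X"
  shows "card {v\<in>X. X - {v} \<subseteq> U} = (if X \<subseteq> U then card X else if card (X - U) = 1 then 1 else 0)"
proof (cases "X \<subseteq> U")
  case True
  then have "{v\<in>X. X - {v} \<subseteq> U} = X" by auto
  then show ?thesis using True by simp
next
  case False
  have e: "{v\<in>X. X - {v} \<subseteq> U} = {v. X - U = {v}}" using False by auto
  show ?thesis
  proof (cases "card (X - U) = 1")
    case True
    then obtain w where "X - U = {w}" by (auto simp: card_Suc_eq)
    then have "{v. X - U = {v}} = {w}" by auto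
    then show ?thesis using e True False by simp
  next
    case c: False
    have "{v. X - U = {v}} = {}" using c by auto
    then show ?thesis unfolding e using c False by simp
  qed
qed

lemma classes_v: assumes "\<rho> \<in> Om"
  shows "card {T\<in>Sk ` Om. T \<subseteq> U \<and> T \<subseteq> Sk \<rho> \<and> card (Sk \<rho> - T) = 1} = card {v\<in>Sk \<rho>. Sk \<rho> - {v} \<subseteq> U}"
proof -
  let ?X = "Sk \<rho>"
  have "{T\<in>Sk ` Om. T \<subseteq> U \<and> T \<subseteq> ?X \<and> card (?X - T) = 1} = (\<lambda>v. ?X - {v}) ` {v\<in>?X. ?X - {v} \<subseteq> U}"
  proof (rule set_eqI, rule iffI)
    fix T assume T: "T \<in> {T\<in>Sk ` Om. T \<subseteq> U \<and> T \<subseteq> ?X \<and> card (?X - T) = 1}"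
    then obtain v where v: "?X - T = {v}" by (auto simp: card_Suc_eq)
    then have "T = ?X - {v}" "v \<in> ?X" using T by auto
    then show "T \<in> (\<lambda>v. ?X - {v}) ` {v\<in>?X. ?X - {v} \<subseteq> U}" using T by auto
  next
    fix T assume "T \<in> (\<lambda>v. ?X - {v}) ` {v\<in>?X. ?X - {v} \<subseteq> U}"
    then obtain v where v: "v \<in> ?X" "T = ?X - {v}" "?X - {v} \<subseteq> U" by auto
    have "?X - T = {v}" using v by auto
    moreover have "T \<in> Sk ` Om" using realiz[OF assms] v by auto
    ultimately show "T \<in> {T\<in>Sk ` Om. T \<subseteq> U \<and> T \<subseteq> ?X \<and> card (?X - T) = 1}" using v by auto
  qed
  moreover have "inj_on (\<lambda>v. ?X - {v}) {v\<in>?X. ?X - {v} \<subseteq> U}"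
    by (rule inj_onI) auto
  ultimately show ?thesis by (simp add: card_image)
qed

lemma N1_sum: assumes "\<rho> \<in> Om"
  shows "real (N1 (Sk \<rho>)) = (\<Sum>s\<in>Om. if Sk \<rho> \<subseteq> Sk s \<and> card (Sk s - Sk \<rho>) = 1 then 1 else 0)"
  unfolding N1_def using finO by (simp add: sum_ind)

lemma ident: "(\<Sum>s\<in>{s\<in>Om. Sk s \<subseteq> U}. g (Sk s)) = real (W U) * real Z1 / real Z0 - real (K1 U)"
proof -
  let ?B = "{s\<in>Om. Sk s \<subseteq> U}"
  have finB: "finite ?B" using finO by auto
  have key: "(\<Sum>s\<in>?B. D (Gp (Sk s))) = (\<Sum>s\<in>?B. real (card (Sk s))) + real (K1 U)"
  proof -
    have "(\<Sum>s\<in>?B. D (Gp (Sk s))) =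
       (\<Sum>s\<in>?B. \<Sum>\<rho>\<in>Om. if Sk s \<subseteq> Sk \<rho> \<and> card (Sk \<rho> - Sk s) = 1 then 1 / real (Zs (Sk s)) else 0)"
    proof (rule sum.cong[OF refl])
      fix s assume "s \<in> ?B"
      then have s: "s \<in> Om" by auto
      have "D (Gp (Sk s)) = (\<Sum>\<rho>\<in>Om. if Sk s \<subseteq> Sk \<rho> \<and> card (Sk \<rho> - Sk s) = 1 then 1 else 0) / real (Zs (Sk s))"
        using D_eq[OF s] N1_sum[OF s] by simp
      also have "\<dots> = (\<Sum>\<rho>\<in>Om. if Sk s \<subseteq> Sk \<rho> \<and> card (Sk \<rho> - Sk s) = 1 then 1 / real (Zs (Sk s)) else 0)"
        unfolding sum_divide_distrib by (rule sum.cong) auto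
      finally show "D (Gp (Sk s)) = \<dots>" .
    qed
    also have "\<dots> = (\<Sum>\<rho>\<in>Om. \<Sum>s\<in>?B. if Sk s \<subseteq> Sk \<rho> \<and> card (Sk \<rho> - Sk s) = 1 then 1 / real (Zs (Sk s)) else 0)"
      by (rule sum.swap)
    also have "\<dots> = (\<Sum>\<rho>\<in>Om. real (card {v\<in>Sk \<rho>. Sk \<rho> - {v} \<subseteq> U}))"
    proof (rule sum.cong[OF refl])
      fix \<rho> assume r: "\<rho> \<in> Om"
      have "(\<Sum>s\<in>?B. if Sk s \<subseteq> Sk \<rho> \<and> card (Sk \<rho> - Sk s) = 1 then 1 / real (Zs (Sk s)) else 0)
          = (\<Sum>s\<in>{s\<in>?B. Sk s \<subseteq> Sk \<rho> \<and> card (Sk \<rho> - Sk s) = 1}. 1 / real (Zs (Sk s)))"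
        using finB by (subst sum.inter_filter) auto
      also have "{s\<in>?B. Sk s \<subseteq> Sk \<rho> \<and> card (Sk \<rho> - Sk s) = 1} =
          {s\<in>Om. (\<lambda>T. T \<subseteq> U \<and> T \<subseteq> Sk \<rho> \<and> card (Sk \<rho> - T) = 1) (Sk s)}" by auto
      also have "(\<Sum>s\<in>\<dots>. 1 / real (Zs (Sk s))) =
          real (card {T\<in>Sk ` Om. T \<subseteq> U \<and> T \<subseteq> Sk \<rho> \<and> card (Sk \<rho> - T) = 1})"
        by (rule CC)
      also have "\<dots> = real (card {v\<in>Sk \<rho>. Sk \<rho> - {v} \<subseteq> U})" using classes_v[OF r] by simp
      finally show "(\<Sum>s\<in>?B. if Sk s \<subseteq> Sk \<rho> \<and> card (Sk \<rho> - Sk s) = 1 then 1 / real (Zs (Sk s)) else 0)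
          = real (card {v\<in>Sk \<rho>. Sk \<rho> - {v} \<subseteq> U})" .
    qed
    also have "\<dots> = (\<Sum>\<rho>\<in>Om. (if Sk \<rho> \<subseteq> U then real (card (Sk \<rho>)) else 0) + (if card (Sk \<rho> - U) = 1 then 1 else 0))"
    proof (rule sum.cong[OF refl])
      fix \<rho> assume "\<rho> \<in> Om"
      show "real (card {v\<in>Sk \<rho>. Sk \<rho> - {v} \<subseteq> U}) =
        (if Sk \<rho> \<subseteq> U then real (card (Sk \<rho>)) else 0) + (if card (Sk \<rho> - U) = 1 then 1 else 0)"
      proof (cases "Sk \<rho> \<subseteq> U")
        case True
        then have "Sk \<rho> - U = {}" by blast
        then have "card (Sk \<rho> - U) = 0" by (metis card.empty)
        then show ?thesis using cnt_v[OF finSk, of \<rho> U] True by simp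
      next
        case False
        then show ?thesis using cnt_v[OF finSk, of \<rho> U] by simp
      qed
    qed
    also have "\<dots> = (\<Sum>s\<in>?B. real (card (Sk s))) + real (K1 U)"
      unfolding sum.distrib K1_def using finO by (simp add: sum_ind sum.inter_filter)
    finally show ?thesis .
  qed
  have "(\<Sum>s\<in>?B. g (Sk s)) = (\<Sum>s\<in>?B. real (card (Sk s))) + (\<Sum>s\<in>?B. real Z1 / real Z0) - (\<Sum>s\<in>?B. D (Gp (Sk s)))"
    unfolding g_def by (simp add: sum.distrib sum_subtractf)
  also have "(\<Sum>s\<in>?B. real Z1 / real Z0) = real (W U) * real Z1 / real Z0" unfolding W_def by simp
  finally show ?thesis using key by simp
qed

definition "d t s = pmf (prs_dist V E t) s"

lemma dist_Suc: "prs_dist V E (Suc t) = bind_pmf (prs_dist V E t) (prs_step V E)"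
  by (simp add: prs_dist_def)

lemma set_step: "s \<in> Om \<Longrightarrow> set_pmf (prs_step V E s) \<subseteq> Om"
  by (auto simp: set_pmf_iff Kn split: if_splits)

lemma set_dist: "set_pmf (prs_dist V E t) \<subseteq> Om"
proof (induction t)
  case 0 then show ?case using finO Om_ne by (simp add: prs_dist_def)
next
  case (Suc t) then show ?case using set_step by (auto simp: dist_Suc)
qed

lemma d_Suc: "d (Suc t) s' = (\<Sum>s\<in>Om. d t s * pmf (prs_step V E s) s')"
proof -
  have "d (Suc t) s' = (\<integral>x. pmf (prs_step V E x) s' \<partial>measure_pmf (prs_dist V E t))"
    unfolding d_def dist_Suc pmf_bind ..
  also have "\<dots> = (\<Sum>s\<in>Om. pmf (prs_step V E s) s' * pmf (prs_dist V E t) s)"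
    by (rule integral_measure_pmf_real) (use finO set_dist in auto)
  finally show ?thesis unfolding d_def by (simp add: mult.commute)
qed

lemma d0: "s \<in> Om \<Longrightarrow> d 0 s = 1 / real (card Om)"
  unfolding d_def prs_dist_def using finO Om_ne by simp

lemma d_nn: "d t s \<ge> 0" unfolding d_def by simp

lemma d_sum: "(\<Sum>s\<in>Om. d t s) = 1"
  unfolding d_def using finO set_dist by (rule sum_pmf_eq_1)

lemma AV: assumes cc: "\<And>s1 s2. s1 \<in> Om \<Longrightarrow> s2 \<in> Om \<Longrightarrow> Sk s1 = Sk s2 \<Longrightarrow> d1 s1 = d1 s2"
  shows "(\<Sum>s\<in>Om. d1 s * f s) =
         (\<Sum>s\<in>Om. d1 s * (\<Sum>s''\<in>{s''\<in>Om. Sk s'' = Sk s}. f s'') / real (Zs (Sk s)))"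
proof -
  have "(\<Sum>s\<in>Om. d1 s * (\<Sum>s''\<in>{s''\<in>Om. Sk s'' = Sk s}. f s'') / real (Zs (Sk s))) =
        (\<Sum>s\<in>Om. \<Sum>s''\<in>Om. if Sk s'' = Sk s then d1 s * f s'' / real (Zs (Sk s)) else 0)"
  proof (rule sum.cong[OF refl])
    fix s assume "s \<in> Om"
    have "(\<Sum>s''\<in>Om. if Sk s'' = Sk s then d1 s * f s'' / real (Zs (Sk s)) else 0) =
          (\<Sum>s''\<in>{s''\<in>Om. Sk s'' = Sk s}. d1 s * f s'' / real (Zs (Sk s)))"
      using finO by (subst sum.inter_filter) auto
    then show "d1 s * (\<Sum>s''\<in>{s''\<in>Om. Sk s'' = Sk s}. f s'') / real (Zs (Sk s)) =
          (\<Sum>s''\<in>Om. if Sk s'' = Sk s then d1 s * f s'' / real (Zs (Sk s)) else 0)"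
      by (simp add: sum_distrib_left sum_divide_distrib)
  qed
  also have "\<dots> = (\<Sum>s''\<in>Om. \<Sum>s\<in>Om. if Sk s'' = Sk s then d1 s * f s'' / real (Zs (Sk s)) else 0)"
    by (rule sum.swap)
  also have "\<dots> = (\<Sum>s''\<in>Om. d1 s'' * f s'')"
  proof (rule sum.cong[OF refl])
    fix s'' assume s'': "s'' \<in> Om"
    have "(\<Sum>s\<in>Om. if Sk s'' = Sk s then d1 s * f s'' / real (Zs (Sk s)) else 0) =
          (\<Sum>s\<in>{s\<in>Om. Sk s'' = Sk s}. d1 s * f s'' / real (Zs (Sk s)))"
      using finO by (subst sum.inter_filter) auto
    also have "\<dots> = (\<Sum>s\<in>{s\<in>Om. Sk s = Sk s''}. d1 s'' * f s'' / real (Zs (Sk s'')))"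
      by (rule sum.cong) (auto simp: cc[OF _ s''])
    also have "\<dots> = d1 s'' * f s''" using Zs_pos[OF s''] unfolding Zs_def by simp
    finally show "(\<Sum>s\<in>Om. if Sk s'' = Sk s then d1 s * f s'' / real (Zs (Sk s)) else 0) = d1 s'' * f s''" .
  qed
  finally show ?thesis by simp
qed

lemma KC: assumes "\<rho> \<in> Om"
  shows "(\<Sum>s\<in>{s\<in>Om. Sk s = Sk \<rho>}. \<Sum>s'\<in>Om. pmf (prs_step V E s) s' * f s') =
         (\<Sum>s'\<in>{s'\<in>Om. Sk s' \<subseteq> Gp (Sk \<rho>)}. f s') / 2 ^ card (Et (Sk \<rho>))"
proof -
  have "(\<Sum>s\<in>{s\<in>Om. Sk s = Sk \<rho>}. \<Sum>s'\<in>Om. pmf (prs_step V E s) s' * f s') =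
        (\<Sum>s'\<in>Om. (\<Sum>s\<in>{s\<in>Om. Sk s = Sk \<rho>}. pmf (prs_step V E s) s') * f s')"
    by (subst sum.swap) (simp add: sum_distrib_right)
  also have "\<dots> = (\<Sum>s'\<in>Om. (if Sk s' \<subseteq> Gp (Sk \<rho>) then f s' / 2 ^ card (Et (Sk \<rho>)) else 0))"
    by (rule sum.cong[OF refl]) (simp add: KL[OF assms])
  also have "\<dots> = (\<Sum>s'\<in>{s'\<in>Om. Sk s' \<subseteq> Gp (Sk \<rho>)}. f s' / 2 ^ card (Et (Sk \<rho>)))"
    using finO by (subst sum.inter_filter) auto
  finally show ?thesis by (simp add: sum_divide_distrib)
qed

lemma inv: "s1 \<in> Om \<Longrightarrow> s2 \<in> Om \<Longrightarrow> Sk s1 = Sk s2 \<Longrightarrow> d t s1 = d t s2"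
proof (induction t arbitrary: s1 s2)
  case 0 then show ?case by (simp add: d0)
next
  case (Suc t)
  have "d (Suc t) s' = (\<Sum>s\<in>Om. d t s * (if Sk s' \<subseteq> Gp (Sk s) then 1 / 2 ^ card (Et (Sk s)) else 0) / real (Zs (Sk s)))"
    if s': "s' \<in> Om" for s'
  proof -
    have "d (Suc t) s' = (\<Sum>s\<in>Om. d t s * (\<Sum>s''\<in>{s''\<in>Om. Sk s'' = Sk s}. pmf (prs_step V E s'') s') / real (Zs (Sk s)))"
      unfolding d_Suc by (rule AV) (use Suc.IH in blast)
    also have "\<dots> = (\<Sum>s\<in>Om. d t s * (if Sk s' \<subseteq> Gp (Sk s) then 1 / 2 ^ card (Et (Sk s)) else 0) / real (Zs (Sk s)))"
      by (rule sum.cong[OF refl]) (simp add: KL s')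
    finally show ?thesis .
  qed
  then show ?case using Suc.prems by simp
qed

definition "a t = (\<Sum>s\<in>Om. d t s * g (Sk s))"
definition "ee t = (\<Sum>s\<in>Om. d t s * real (card (Sk s)))"
definition "r t = (\<Sum>s\<in>Om. d t s * (if Sk s = {} then 0 else 1))"

lemma step_sum: "(\<Sum>s'\<in>Om. d (Suc t) s' * f s') =
   (\<Sum>s\<in>Om. d t s * (\<Sum>s'\<in>{s'\<in>Om. Sk s' \<subseteq> Gp (Sk s)}. f s') / 2 ^ card (Et (Sk s)) / real (Zs (Sk s)))"
proof -
  have "(\<Sum>s'\<in>Om. d (Suc t) s' * f s') = (\<Sum>s\<in>Om. d t s * (\<Sum>s'\<in>Om. pmf (prs_step V E s) s' * f s'))"
    unfolding d_Suc sum_distrib_right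
    by (subst sum.swap) (simp add: sum_distrib_left mult.assoc)
  also have "\<dots> = (\<Sum>s\<in>Om. d t s * (\<Sum>s''\<in>{s''\<in>Om. Sk s'' = Sk s}. \<Sum>s'\<in>Om. pmf (prs_step V E s'') s' * f s') / real (Zs (Sk s)))"
    by (rule AV) (rule inv)
  also have "\<dots> = (\<Sum>s\<in>Om. d t s * ((\<Sum>s'\<in>{s'\<in>Om. Sk s' \<subseteq> Gp (Sk s)}. f s') / 2 ^ card (Et (Sk s))) / real (Zs (Sk s)))"
    by (rule sum.cong[OF refl]) (simp add: KC)
  finally show ?thesis by simp
qed

lemma Wpos: "s \<in> Om \<Longrightarrow> real (W (Gp (Sk s))) > 0"
  using W_Zs Zs_pos by simp

lemma a_step: "a (Suc t) = a t - ee t"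
proof -
  have "a (Suc t) = (\<Sum>s\<in>Om. d t s * (g (Sk s) - real (card (Sk s))))"
    unfolding a_def step_sum
  proof (rule sum.cong[OF refl])
    fix s assume s: "s \<in> Om"
    let ?T = "Sk s"
    have W: "real (W (Gp ?T)) = 2 ^ card (Et ?T) * real (Zs ?T)" by (rule W_Zs[OF s])
    have Wp: "real (W (Gp ?T)) > 0" using Wpos[OF s] .
    have "(\<Sum>s'\<in>{s'\<in>Om. Sk s' \<subseteq> Gp ?T}. g (Sk s')) / 2 ^ card (Et ?T) / real (Zs ?T)
        = (real (W (Gp ?T)) * real Z1 / real Z0 - real (K1 (Gp ?T))) / real (W (Gp ?T))"
      unfolding ident W by (simp add: divide_divide_eq_left mult.commute)
    also have "\<dots> = g ?T - real (card ?T)"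
      unfolding g_def D_def using Wp by (simp add: diff_divide_distrib)
    finally have eq: "(\<Sum>s'\<in>{s'\<in>Om. Sk s' \<subseteq> Gp ?T}. g (Sk s')) / 2 ^ card (Et ?T) / real (Zs ?T)
        = g ?T - real (card ?T)" .
    have "d t s * (\<Sum>s'\<in>{s'\<in>Om. Sk s' \<subseteq> Gp ?T}. g (Sk s')) / 2 ^ card (Et ?T) / real (Zs ?T)
        = d t s * ((\<Sum>s'\<in>{s'\<in>Om. Sk s' \<subseteq> Gp ?T}. g (Sk s')) / 2 ^ card (Et ?T) / real (Zs ?T))"
      by simp
    also have "\<dots> = d t s * (g ?T - real (card ?T))" by (simp only: eq)
    finally show "d t s * (\<Sum>s'\<in>{s'\<in>Om. Sk s' \<subseteq> Gp ?T}. g (Sk s')) / 2 ^ card (Et ?T) / real (Zs ?T)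
        = d t s * (g ?T - real (card ?T))" .
  qed
  then show ?thesis unfolding a_def ee_def by (simp add: right_diff_distrib sum_subtractf)
qed

lemma a0: "a 0 = real Z1 / real Z0"
proof -
  have "{s\<in>Om. Sk s \<subseteq> V} = Om" using SkV by auto
  then have WV: "W V = card Om" unfolding W_def by simp
  have "K1 V = 0" unfolding K1_def using SkV by (simp add: Diff_eq_empty_iff[THEN iffD2])
  have "a 0 = (\<Sum>s\<in>Om. g (Sk s)) / real (card Om)"
    unfolding a_def by (simp add: d0 sum_divide_distrib)
  also have "(\<Sum>s\<in>Om. g (Sk s)) = real (W V) * real Z1 / real Z0 - real (K1 V)"
    using ident[of V] \<open>{s\<in>Om. Sk s \<subseteq> V} = Om\<close> by simp
  finally show ?thesis using WV \<open>K1 V = 0\<close> finO Om_ne by simp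
qed

definition "\<delta> = real Z0 / real (card Om)"

lemma Z0_le: "Z0 \<le> card Om"
  unfolding Z_sink_def using finO by (intro card_mono) auto

lemma delta: "0 < \<delta>" "\<delta> \<le> 1"
  unfolding \<delta>_def using Zpos Z0_le finO Om_ne by (auto simp: card_gt_0_iff)

lemma r_le_1: "r t \<le> 1"
proof -
  have "r t \<le> (\<Sum>s\<in>Om. d t s)" unfolding r_def by (rule sum_mono) (simp add: d_nn)
  then show ?thesis using d_sum by simp
qed

lemma r_step: "r (Suc t) \<le> (1 - \<delta>) * r t"
proof -
  have "r (Suc t) = (\<Sum>s\<in>Om. d t s * (\<Sum>s'\<in>{s'\<in>Om. Sk s' \<subseteq> Gp (Sk s)}. (if Sk s' = {} then 0 else 1)) / 2 ^ card (Et (Sk s)) / real (Zs (Sk s)))"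
    unfolding r_def by (rule step_sum)
  also have "\<dots> \<le> (\<Sum>s\<in>Om. (1 - \<delta>) * (d t s * (if Sk s = {} then 0 else 1)))"
  proof (rule sum_mono)
    fix s assume s: "s \<in> Om"
    let ?T = "Sk s"
    let ?B = "{s'\<in>Om. Sk s' \<subseteq> Gp ?T}"
    have W: "real (W (Gp ?T)) = 2 ^ card (Et ?T) * real (Zs ?T)" by (rule W_Zs[OF s])
    have Wp: "real (W (Gp ?T)) > 0" using Wpos[OF s] .
    have e1: "{s'\<in>?B. Sk s' = {}} = {s'\<in>Om. Sk s' = {}}" by auto
    have "(\<Sum>s'\<in>?B. (if Sk s' = {} then 0 else 1 :: real)) = (\<Sum>s'\<in>?B. 1 - (if Sk s' = {} then 1 else 0))"
      by (rule sum.cong) auto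
    also have "\<dots> = real (W (Gp ?T)) - real Z0"
      unfolding sum_subtractf using finO e1 Z0_eq by (simp add: sum_ind W_def Zs_def)
    finally have sB: "(\<Sum>s'\<in>?B. (if Sk s' = {} then 0 else 1 :: real)) = real (W (Gp ?T)) - real Z0" .
    have val: "(\<Sum>s'\<in>?B. (if Sk s' = {} then 0 else 1 :: real)) / 2 ^ card (Et ?T) / real (Zs ?T)
        = 1 - real Z0 / real (W (Gp ?T))"
      unfolding sB using Wp Zs_pos[OF s] unfolding W by (simp add: divide_divide_eq_left diff_divide_distrib mult.commute)
    have "1 - real Z0 / real (W (Gp ?T)) \<le> (1 - \<delta>) * (if ?T = {} then 0 else 1)"
    proof (cases "?T = {}")
      case True
      then have "W (Gp ?T) = Z0" using Z0_eq Gp_empty by simp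
      then show ?thesis using True Zpos by simp
    next
      case False
      have "W (Gp ?T) \<le> card Om" unfolding W_def using finO by (intro card_mono) auto
      then have "real Z0 / real (card Om) \<le> real Z0 / real (W (Gp ?T))"
        using Wp by (intro divide_left_mono) auto
      then show ?thesis using False unfolding \<delta>_def by simp
    qed
    then have le: "d t s * (1 - real Z0 / real (W (Gp ?T))) \<le> d t s * ((1 - \<delta>) * (if ?T = {} then 0 else 1))"
      using d_nn by (intro mult_left_mono) auto
    have "d t s * (\<Sum>s'\<in>?B. (if Sk s' = {} then 0 else 1)) / 2 ^ card (Et ?T) / real (Zs ?T)
        = d t s * ((\<Sum>s'\<in>?B. (if Sk s' = {} then 0 else 1)) / 2 ^ card (Et ?T) / real (Zs ?T))" by simp
    also have "\<dots> = d t s * (1 - real Z0 / real (W (Gp ?T)))" by (simp only: val)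
    also have "\<dots> \<le> d t s * ((1 - \<delta>) * (if ?T = {} then 0 else 1))" by (rule le)
    also have "\<dots> = (1 - \<delta>) * (d t s * (if ?T = {} then 0 else 1))" by simp
    finally show "d t s * (\<Sum>s'\<in>?B. (if Sk s' = {} then 0 else 1)) / 2 ^ card (Et ?T) / real (Zs ?T)
        \<le> (1 - \<delta>) * (d t s * (if ?T = {} then 0 else 1))" .
  qed
  also have "\<dots> = (1 - \<delta>) * r t" unfolding r_def by (simp add: sum_distrib_left)
  finally show ?thesis .
qed

lemma r_bound: "r t \<le> (1 - \<delta>) ^ t"
proof (induction t)
  case 0 then show ?case using r_le_1 by simp
next
  case (Suc t)
  have "r (Suc t) \<le> (1 - \<delta>) * r t" by (rule r_step)
  also have "\<dots> \<le> (1 - \<delta>) * (1 - \<delta>) ^ t" using Suc delta by (intro mult_left_mono) auto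
  finally show ?case by simp
qed

lemma r_nn: "r t \<ge> 0" unfolding r_def by (rule sum_nonneg) (simp add: d_nn)

lemma a_bound: "\<bar>a t\<bar> \<le> (\<Sum>s\<in>Om. \<bar>g (Sk s)\<bar>) * r t"
proof -
  let ?M = "\<Sum>s\<in>Om. \<bar>g (Sk s)\<bar>"
  have "\<bar>a t\<bar> \<le> (\<Sum>s\<in>Om. \<bar>d t s * g (Sk s)\<bar>)" unfolding a_def by (rule sum_abs)
  also have "\<dots> \<le> (\<Sum>s\<in>Om. ?M * (d t s * (if Sk s = {} then 0 else 1)))"
  proof (rule sum_mono)
    fix s assume s: "s \<in> Om"
    have "\<bar>g (Sk s)\<bar> \<le> ?M * (if Sk s = {} then 0 else 1)"
    proof (cases "Sk s = {}")
      case True then show ?thesis by (simp add: g_empty)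
    next
      case False
      have "\<bar>g (Sk s)\<bar> \<le> ?M" using finO s by (intro member_le_sum) auto
      then show ?thesis using False by simp
    qed
    then have "d t s * \<bar>g (Sk s)\<bar> \<le> d t s * (?M * (if Sk s = {} then 0 else 1))"
      using d_nn by (intro mult_left_mono) auto
    then show "\<bar>d t s * g (Sk s)\<bar> \<le> ?M * (d t s * (if Sk s = {} then 0 else 1))"
      using d_nn[of t s] by (simp add: abs_mult mult.commute mult.left_commute)
  qed
  also have "\<dots> = ?M * r t" unfolding r_def by (simp add: sum_distrib_left)
  finally show ?thesis .
qed

lemma a_lim: "a \<longlonglongrightarrow> 0"
proof -
  let ?M = "\<Sum>s\<in>Om. \<bar>g (Sk s)\<bar>"
  have M: "?M \<ge> 0" by (rule sum_nonneg) auto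
  have n: "norm (1 - \<delta>) < 1" using delta by simp
  have "(\<lambda>t. ?M * (1 - \<delta>) ^ t) \<longlonglongrightarrow> ?M * 0"
    by (rule tendsto_mult[OF tendsto_const LIMSEQ_power_zero[OF n]])
  then have lim: "(\<lambda>t. ?M * (1 - \<delta>) ^ t) \<longlonglongrightarrow> 0" by simp
  have b: "\<forall>t. norm (a t) \<le> ?M * (1 - \<delta>) ^ t"
  proof
    fix t
    have "norm (a t) \<le> ?M * r t" using a_bound[of t] by simp
    also have "\<dots> \<le> ?M * (1 - \<delta>) ^ t" by (intro mult_left_mono r_bound M)
    finally show "norm (a t) \<le> ?M * (1 - \<delta>) ^ t" .
  qed
  show ?thesis by (rule Lim_null_comparison[OF always_eventually[OF b] lim])
qed

lemma ee_nn: "ee t \<ge> 0" unfolding ee_def by (rule sum_nonneg) (simp add: d_nn)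

lemma partial: "(\<Sum>i<n. ee i) = a 0 - a n"
  by (induction n) (auto simp: a_step)

lemma ee_sums: "ee sums (real Z1 / real Z0)"
proof -
  have "(\<lambda>n. a 0 - a n) \<longlonglongrightarrow> a 0 - 0" by (intro tendsto_diff tendsto_const a_lim)
  then show ?thesis unfolding sums_def partial a0 by simp
qed

lemma integral_ee: "(\<integral>\<^sup>+ \<sigma>. ennreal (real (card (Sk \<sigma>))) \<partial>measure_pmf (prs_dist V E t)) = ennreal (ee t)"
proof -
  have "(\<integral>\<^sup>+ \<sigma>. ennreal (real (card (Sk \<sigma>))) \<partial>measure_pmf (prs_dist V E t))
      = (\<Sum>s\<in>Om. ennreal (real (card (Sk s))) * ennreal (pmf (prs_dist V E t) s))"
    by (rule nn_integral_measure_pmf_support) (use finO set_dist in auto)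
  also have "\<dots> = (\<Sum>s\<in>Om. ennreal (d t s * real (card (Sk s))))"
    unfolding d_def by (rule sum.cong[OF refl]) (simp add: ennreal_mult mult.commute)
  also have "\<dots> = ennreal (ee t)" unfolding ee_def by (rule sum_ennreal) (simp add: d_nn)
  finally show ?thesis .
qed

lemma main: "(\<Sum>t. \<integral>\<^sup>+ \<sigma>. ennreal (real (card (sinks V E \<sigma>))) \<partial>measure_pmf (prs_dist V E t))
         = ennreal (real (Z_sink 1 V E) / real (Z_sink 0 V E))"
proof -
  have "(\<Sum>t. \<integral>\<^sup>+ \<sigma>. ennreal (real (card (sinks V E \<sigma>))) \<partial>measure_pmf (prs_dist V E t)) = (\<Sum>t. ennreal (ee t))"
    using integral_ee by simp
  also have "\<dots> = ennreal (\<Sum>t. ee t)"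
    using ee_nn ee_sums by (intro suminf_ennreal2) (auto simp: sums_summable)
  also have "(\<Sum>t. ee t) = real Z1 / real Z0" using ee_sums by (simp add: sums_iff)
  finally show ?thesis .
qed

end

theorem theorem16:
  fixes V :: "'a set" and E :: "'a set set"
  assumes "finite_graph V E"
    and "Z_sink 0 V E > 0"
  shows "(\<Sum>t. \<integral>\<^sup>+ \<sigma>. ennreal (real (card (sinks V E \<sigma>))) \<partial>measure_pmf (prs_dist V E t))
         = ennreal (real (Z_sink 1 V E) / real (Z_sink 0 V E))"
proof -
  interpret sfo V E using assms by unfold_locales
  show ?thesis by (rule main)
qed

end
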